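(* Let $\theta\in\mathbb{R}$, let $U\subset\mathbb{R}^4$ be a connected open set, identified with an open subset of $\mathbb{C}^2$ via $z_1=x^2+ix^1$, $z_2=x^4+ix^3$, and let $\omega^\pm:U\to M_4(\mathbb{R})$ be smooth with $\omega^\pm(x)$ antisymmetric and $\star\omega^\pm(x)=\pm\omega^\pm(x)$ for all $x\in U$. Assume $\det[E_4-\omega^\pm\theta^\mp]\neq0$ on $U$ and that for each $x$ the matrix $g^\pm(x):=2\left(E_4-\omega^\pm(x)\theta^\mp\right)^{-1}-E_4$ lies in the image of $\iota_{sym}$. Put $h^\pm:=\iota_{sym}^{-1}[g^\pm]$. Then $h^\pm$ is a smooth map to Hermitian $2\times 2$ matrices which is either positive definite at every point of $U$ or negative definite at every point of $U$, $\det[h^\pm]=1$ on $U$, and hence its Ricci curvature $R_{\bar jk}=\partial_{\bar z_j}\partial_{z_k}\log\det[h^\pm]$ vanishes identically on $U$ (i.e. $h^\pm$ is a local Ricci-flat Hermitian metric).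
   Context: $E_4$ is the $4\times4$ identity matrix. For a real antisymmetric $4\times 4$ matrix $\omega=(\omega_{kl})$, $(\star\omega)_{kl}=\frac12\sum_{m,n=1}^4\varepsilon_{klmn}\omega_{mn}$ ($\varepsilon$ the Levi-Civita symbol). For $\theta\in\mathbb{R}$, $\theta^{\pm}$ denotes the $4\times4$ matrix whose only nonzero entries are $(\theta^\pm)_{12}=-\theta$, $(\theta^\pm)_{21}=\theta$, $(\theta^\pm)_{34}=\mp\theta$, $(\theta^\pm)_{43}=\pm\theta$. For a Hermitian $2\times2$ matrix $h=(h_{k\bar l})$, $\iota_{sym}(h)$ is the real symmetric $4\times4$ matrix $$\begin{pmatrix} h_{1\bar1}&0&\frac12(h_{1\bar2}+h_{2\bar1})&\frac1{2i}(h_{2\bar1}-h_{1\bar2})\\ 0&h_{1\bar1}&-\frac1{2i}(h_{2\bar1}-h_{1\bar2})&\frac12(h_{1\bar2}+h_{2\bar1})\\ \frac12(h_{1\bar2}+h_{2\bar1})&-\frac1{2i}(h_{2\bar1}-h_{1\bar2})&h_{2\bar2}&0\\ \frac1{2i}(h_{2\bar1}-h_{1\bar2})&\frac12(h_{1\bar2}+h_{2\bar1})&0&h_{2\bar2}\end{pmatrix};$$ $\iota_{sym}$ is injective. The Ricci curvature of a Hermitian metric $h$ is taken to be $R_{\bar jk}=\partial_{\bar j}\partial_k\log\det[h]$. *)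

theory Defs
  imports "HOL-Analysis.Analysis"
begin

fun C_k_on :: "nat \<Rightarrow> ('a::real_normed_vector \<Rightarrow> 'b::real_normed_vector) \<Rightarrow> 'a set \<Rightarrow> bool" where
  "C_k_on 0 f S = continuous_on S f"
| "C_k_on (Suc k) f S =
     ((\<forall>x\<in>S. f differentiable (at x)) \<and>
      (\<forall>v. C_k_on k (\<lambda>x. frechet_derivative f (at x) v) S))"

definition smooth_on :: "'a::real_normed_vector set \<Rightarrow> ('a \<Rightarrow> 'b::real_normed_vector) \<Rightarrow> bool" where
  "smooth_on S f \<longleftrightarrow> (\<forall>k. C_k_on k f S)"

definition row4 :: "'a \<Rightarrow> 'a \<Rightarrow> 'a \<Rightarrow> 'a \<Rightarrow> 4 \<Rightarrow> 'a" where
  "row4 a b c d k = (if k = 1 then a else if k = 2 then b else if k = 3 then c else d)"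

definition mat4 :: "real list list \<Rightarrow> real^4^4" where
  "mat4 rs = (\<chi> k l. row4 (rs!0) (rs!1) (rs!2) (rs!3) k ! (if l = 1 then 0 else if l = 2 then 1 else if l = 3 then 2 else 3))"

definition E4 :: "real^4^4" where "E4 = mat 1"

definition antisym4 :: "real^4^4 \<Rightarrow> bool" where
  "antisym4 w \<longleftrightarrow> transpose w = - w"

definition levi_civita :: "4 \<Rightarrow> 4 \<Rightarrow> 4 \<Rightarrow> 4 \<Rightarrow> real" where
  "levi_civita k l m n =
     (let p = row4 k l m n in if p permutes (UNIV :: 4 set) then of_int (sign p) else 0)"

definition hodge_star :: "real^4^4 \<Rightarrow> real^4^4" where
  "hodge_star w = (\<chi> k l. (1/2) * (\<Sum>m\<in>UNIV. \<Sum>n\<in>UNIV. levi_civita k l m n * w$m$n))"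

text \<open>theta_pm s t is the matrix theta^+ for s = 1 and theta^- for s = -1.\<close>
definition theta_pm :: "real \<Rightarrow> real \<Rightarrow> real^4^4" where
  "theta_pm s t = mat4 [[0, -t, 0, 0], [t, 0, 0, 0], [0, 0, 0, -s*t], [0, 0, s*t, 0]]"

definition hermitian2 :: "complex^2^2 \<Rightarrow> bool" where
  "hermitian2 H \<longleftrightarrow> (\<forall>i j. H$i$j = cnj (H$j$i))"

definition pos_def2 :: "complex^2^2 \<Rightarrow> bool" where
  "pos_def2 H \<longleftrightarrow> (\<forall>v::complex^2. v \<noteq> 0 \<longrightarrow>
      (\<Sum>i\<in>UNIV. \<Sum>j\<in>UNIV. cnj (v$i) * H$i$j * v$j) \<in> \<real> \<and>
      Re (\<Sum>i\<in>UNIV. \<Sum>j\<in>UNIV. cnj (v$i) * H$i$j * v$j) > 0)"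

definition neg_def2 :: "complex^2^2 \<Rightarrow> bool" where
  "neg_def2 H \<longleftrightarrow> pos_def2 (- H)"

text \<open>iota_sym (defined on Hermitian matrices, where all the displayed entries are real).\<close>
definition iota_sym :: "complex^2^2 \<Rightarrow> real^4^4" where
  "iota_sym H =
    (let a = Re (H$1$1); d = Re (H$2$2);
         p = Re ((H$1$2 + H$2$1) / 2); q = Re ((H$2$1 - H$1$2) / (2 * \<i>))
     in mat4 [[a, 0, p, q], [0, a, -q, p], [p, -q, d, 0], [q, p, 0, d]])"

text \<open>Coordinates: z1 = x2 + i x1, z2 = x4 + i x3.\<close>
definition partial4 :: "4 \<Rightarrow> (real^4 \<Rightarrow> complex) \<Rightarrow> real^4 \<Rightarrow> complex" where
  "partial4 i f x = frechet_derivative f (at x) (axis i 1)"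

definition re_idx :: "2 \<Rightarrow> 4" where "re_idx j = (if j = 1 then 2 else 4)"
definition im_idx :: "2 \<Rightarrow> 4" where "im_idx j = (if j = 1 then 1 else 3)"

definition dz :: "2 \<Rightarrow> (real^4 \<Rightarrow> complex) \<Rightarrow> real^4 \<Rightarrow> complex" where
  "dz j f x = (partial4 (re_idx j) f x - \<i> * partial4 (im_idx j) f x) / 2"

definition dzbar :: "2 \<Rightarrow> (real^4 \<Rightarrow> complex) \<Rightarrow> real^4 \<Rightarrow> complex" where
  "dzbar j f x = (partial4 (re_idx j) f x + \<i> * partial4 (im_idx j) f x) / 2"

text \<open>R_{jbar k} = d_{zbar j} d_{z k} log det h  (det h is real for Hermitian h).\<close>
definition ricci :: "(real^4 \<Rightarrow> complex^2^2) \<Rightarrow> 2 \<Rightarrow> 2 \<Rightarrow> real^4 \<Rightarrow> complex" where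
  "ricci h j k x = dzbar j (dz k (\<lambda>y. complex_of_real (ln (Re (det (h y)))))) x"

end

theory Submission
  imports Defs
begin

lemma C_k_cong:
  assumes "open U" "\<And>x. x \<in> U \<Longrightarrow> f x = g x" "C_k_on k f U"
  shows "C_k_on k g U"
  using assms
proof (induction k arbitrary: f g)
  case 0
  then show ?case using continuous_on_cong by fastforce
next
  case (Suc k)
  have d: "\<forall>x\<in>U. f differentiable (at x)" and c: "\<And>v. C_k_on k (\<lambda>x. frechet_derivative f (at x) v) U"
    using Suc.prems by auto
  have dg: "\<forall>x\<in>U. g differentiable (at x)"
  proof
    fix x assume x: "x \<in> U"
    have "(f has_derivative frechet_derivative f (at x)) (at x)"
      using d x frechet_derivative_works by blast
    then have "(g has_derivative frechet_derivative f (at x)) (at x)"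
      using has_derivative_transform_within_open[OF _ Suc.prems(1) x] Suc.prems(2) by metis
    then show "g differentiable (at x)" unfolding differentiable_def by blast
  qed
  have "C_k_on k (\<lambda>x. frechet_derivative g (at x) v) U" for v
    apply (rule Suc.IH[OF Suc.prems(1) _ c[of v]])
    using frechet_derivative_transform_within_open[of f _ U g] d Suc.prems(1,2) by metis
  then show ?case using dg by simp
qed

lemma C_k_mono:
  assumes "open U" "C_k_on (Suc k) f U"
  shows "C_k_on k f U"
  using assms
proof (induction k arbitrary: f)
  case 0
  then show ?case
    by (auto intro!: continuous_at_imp_continuous_on differentiable_imp_continuous_within)
next
  case (Suc k)
  then show ?case by auto
qed

lemma C_k_const: "C_k_on k (\<lambda>x. c) U"
proof (induction k arbitrary: c)
  case 0
  then show ?case by simp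
next
  case (Suc k)
  then show ?case by simp
qed

lemma C_k_add:
  assumes "open U" "C_k_on k f U" "C_k_on k g U"
  shows "C_k_on k (\<lambda>x. f x + g x) U"
  using assms
proof (induction k arbitrary: f g)
  case 0
  then show ?case by (simp add: continuous_on_add)
next
  case (Suc k)
  have df: "\<forall>x\<in>U. f differentiable (at x)" and cf: "\<And>v. C_k_on k (\<lambda>x. frechet_derivative f (at x) v) U"
    and dg: "\<forall>x\<in>U. g differentiable (at x)" and cg: "\<And>v. C_k_on k (\<lambda>x. frechet_derivative g (at x) v) U"
    using Suc.prems by auto
  have der: "((\<lambda>x. f x + g x) has_derivative (\<lambda>v. frechet_derivative f (at x) v + frechet_derivative g (at x) v)) (at x)"
    if "x \<in> U" for x
    using df dg that frechet_derivative_works has_derivative_add by blast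
  have "C_k_on k (\<lambda>x. frechet_derivative (\<lambda>x. f x + g x) (at x) v) U" for v
    apply (rule C_k_cong[OF Suc.prems(1) _ Suc.IH[OF Suc.prems(1) cf[of v] cg[of v]]])
    using frechet_derivative_at[OF der, symmetric] by simp
  moreover have "\<forall>x\<in>U. (\<lambda>x. f x + g x) differentiable (at x)"
    using der differentiable_def by blast
  ultimately show ?case by simp
qed

lemma C_k_linear:
  assumes L: "bounded_linear L" and "open U" "C_k_on k f U"
  shows "C_k_on k (\<lambda>x. L (f x)) U"
  using assms(2,3)
proof (induction k arbitrary: f)
  case 0
  then show ?case using bounded_linear.continuous_on[OF L] by simp
next
  case (Suc k)
  have df: "\<forall>x\<in>U. f differentiable (at x)" and cf: "\<And>v. C_k_on k (\<lambda>x. frechet_derivative f (at x) v) U"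
    using Suc.prems by auto
  have der: "((\<lambda>x. L (f x)) has_derivative (\<lambda>v. L (frechet_derivative f (at x) v))) (at x)"
    if "x \<in> U" for x
    using df that frechet_derivative_works bounded_linear.has_derivative[OF L] by blast
  have "C_k_on k (\<lambda>x. frechet_derivative (\<lambda>x. L (f x)) (at x) v) U" for v
    apply (rule C_k_cong[OF Suc.prems(1) _ Suc.IH[OF Suc.prems(1) cf[of v]]])
    using frechet_derivative_at[OF der, symmetric] by simp
  moreover have "\<forall>x\<in>U. (\<lambda>x. L (f x)) differentiable (at x)"
    using der differentiable_def by blast
  ultimately show ?case by simp
qed

lemma C_k_bilinear:
  assumes B: "bounded_bilinear B" and "open U" "C_k_on k f U" "C_k_on k g U"
  shows "C_k_on k (\<lambda>x. B (f x) (g x)) U"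
  using assms(2-)
proof (induction k arbitrary: f g)
  case 0
  then show ?case using bounded_bilinear.continuous_on[OF B] by simp
next
  case (Suc k)
  have df: "\<forall>x\<in>U. f differentiable (at x)" and cf: "\<And>v. C_k_on k (\<lambda>x. frechet_derivative f (at x) v) U"
    and dg: "\<forall>x\<in>U. g differentiable (at x)" and cg: "\<And>v. C_k_on k (\<lambda>x. frechet_derivative g (at x) v) U"
    using Suc.prems by auto
  have fk: "C_k_on k f U" and gk: "C_k_on k g U" using C_k_mono Suc.prems by blast+
  have der: "((\<lambda>x. B (f x) (g x)) has_derivative
      (\<lambda>v. B (f x) (frechet_derivative g (at x) v) + B (frechet_derivative f (at x) v) (g x))) (at x)"
    if "x \<in> U" for x
  proof -
    have "(f has_derivative frechet_derivative f (at x)) (at x)" "(g has_derivative frechet_derivative g (at x)) (at x)"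
      using df dg that frechet_derivative_works by blast+
    from bounded_bilinear.FDERIV[OF B this] show ?thesis .
  qed
  have "C_k_on k (\<lambda>x. frechet_derivative (\<lambda>x. B (f x) (g x)) (at x) v) U" for v
    apply (rule C_k_cong[OF Suc.prems(1) _ C_k_add[OF Suc.prems(1) Suc.IH[OF Suc.prems(1) fk cg[of v]]
           Suc.IH[OF Suc.prems(1) cf[of v] gk]]])
    using frechet_derivative_at[OF der, symmetric] by simp
  moreover have "\<forall>x\<in>U. (\<lambda>x. B (f x) (g x)) differentiable (at x)"
    using der differentiable_def by blast
  ultimately show ?case by simp
qed

lemma C_k_inverse:
  fixes f :: "'a::real_normed_vector \<Rightarrow> real"
  assumes "open U" "\<forall>x\<in>U. f x \<noteq> 0" "\<forall>k. C_k_on k f U"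
  shows "C_k_on k (\<lambda>x. inverse (f x)) U"
proof (induction k)
  case 0
  then show ?case using assms continuous_on_inverse[of U f] by (metis C_k_on.simps(1))
next
  case (Suc k)
  have df: "\<forall>x\<in>U. f differentiable (at x)" and cf: "\<And>v. C_k_on k (\<lambda>x. frechet_derivative f (at x) v) U"
    using assms(3)[rule_format, of "Suc k"] by auto
  have der: "((\<lambda>x. inverse (f x)) has_derivative
      (\<lambda>v. - (inverse (f x) * frechet_derivative f (at x) v * inverse (f x)))) (at x)"
    if "x \<in> U" for x
  proof -
    have "(f has_derivative frechet_derivative f (at x)) (at x)"
      using df that frechet_derivative_works by blast
    from Deriv.has_derivative_inverse[OF _ this] assms(2) that show ?thesis by blast
  qed
  have lin: "bounded_linear (\<lambda>r::real. - r)" by (rule bounded_linear_minus[OF bounded_linear_ident])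
  have "C_k_on k (\<lambda>x. frechet_derivative (\<lambda>x. inverse (f x)) (at x) v) U" for v
    apply (rule C_k_cong[OF assms(1) _ C_k_linear[OF lin assms(1)
          C_k_bilinear[OF bounded_bilinear_mult assms(1)
            C_k_bilinear[OF bounded_bilinear_mult assms(1) Suc.IH cf[of v]] Suc.IH]]])
    using frechet_derivative_at[OF der, symmetric] by simp
  moreover have "\<forall>x\<in>U. (\<lambda>x. inverse (f x)) differentiable (at x)"
    using der differentiable_def by blast
  ultimately show ?case by simp
qed

lemma sum_4: "sum f (UNIV::4 set) = f 1 + f 2 + f 3 + f 4"
  unfolding UNIV_4 by (simp add: ac_simps)
lemma lc_nonperm: "\<not> (row4 k l m n) permutes (UNIV::4 set)" if "k = l \<or> k = m \<or> k = n \<or> l = m \<or> l = n \<or> m = n"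
proof
  assume "row4 k l m n permutes UNIV"
  then have "inj (row4 k l m n)" by (simp add: permutes_inj)
  then have I: "\<And>a b. row4 k l m n a = row4 k l m n b \<Longrightarrow> a = b" by (simp add: inj_eq)
  have "row4 k l m n 1 = k" "row4 k l m n 2 = l" "row4 k l m n 3 = m" "row4 k l m n 4 = n"
    by (simp_all add: row4_def)
  then show False using that I[of 1 2] I[of 1 3] I[of 1 4] I[of 2 3] I[of 2 4] I[of 3 4] by auto
qed
lemma row4_id: "row4 (1::4) 2 3 4 = id"
  by (rule ext) (metis row4_def id_apply exhaust_4)
lemma ext4: "(\<And>x::4. x = 1 \<or> x = 2 \<or> x = 3 \<or> x = 4 \<Longrightarrow> f x = g x) \<Longrightarrow> f = g"
  using exhaust_4 by blast
lemma p1: "row4 (1::4) 2 4 3 = Transposition.transpose 3 4"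
  by (rule ext4) (auto simp: row4_def Transposition.transpose_def)
lemma p2: "row4 (1::4) 3 2 4 = Transposition.transpose 2 3"
  by (rule ext4) (auto simp: row4_def Transposition.transpose_def)
lemma p3: "row4 (1::4) 4 3 2 = Transposition.transpose 2 4"
  by (rule ext4) (auto simp: row4_def Transposition.transpose_def)
lemma p4: "row4 (1::4) 3 4 2 = Transposition.transpose 2 3 \<circ> Transposition.transpose 3 4"
  by (rule ext4) (auto simp: row4_def Transposition.transpose_def)
lemma p5: "row4 (1::4) 4 2 3 = Transposition.transpose 2 4 \<circ> Transposition.transpose 3 4"
  by (rule ext4) (auto simp: row4_def Transposition.transpose_def)
lemma sgn_t: "a \<noteq> b \<Longrightarrow> sign (Transposition.transpose a b) = -1"
  by (simp add: sign_swap_id)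
lemma sgn_tt: "a \<noteq> b \<Longrightarrow> c \<noteq> d \<Longrightarrow> sign (Transposition.transpose a b \<circ> Transposition.transpose c d) = 1"
  by (simp add: sign_compose permutation_swap_id sign_swap_id)
lemma perm_tt: "(Transposition.transpose a b \<circ> Transposition.transpose c d) permutes (UNIV::'a set)"
  by (simp add: permutes_compose permutes_swap_id)

lemma lc12: "levi_civita 1 2 m n = (if m = 3 \<and> n = 4 then 1 else if m = 4 \<and> n = 3 then -1 else 0)"
proof -
  consider "m = 3 \<and> n = 4" | "m = 4 \<and> n = 3" | "1 = m \<or> 1 = n \<or> 2 = m \<or> 2 = n \<or> m = n"
    using exhaust_4[of m] exhaust_4[of n] by auto
  then show ?thesis
  proof cases
    case 1 then show ?thesis by (simp add: levi_civita_def Let_def row4_id permutes_id)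
  next
    case 2 then show ?thesis by (simp add: levi_civita_def Let_def p1 permutes_swap_id sgn_t)
  next
    case 3 then show ?thesis using lc_nonperm[of 1 2 m n] by (auto simp: levi_civita_def)
  qed
qed

lemma lc13: "levi_civita 1 3 m n = (if m = 2 \<and> n = 4 then -1 else if m = 4 \<and> n = 2 then 1 else 0)"
proof -
  consider "m = 2 \<and> n = 4" | "m = 4 \<and> n = 2" | "1 = m \<or> 1 = n \<or> 3 = m \<or> 3 = n \<or> m = n"
    using exhaust_4[of m] exhaust_4[of n] by auto
  then show ?thesis
  proof cases
    case 1 then show ?thesis by (simp add: levi_civita_def Let_def p2 permutes_swap_id sgn_t)
  next
    case 2 then show ?thesis by (simp add: levi_civita_def Let_def p4 perm_tt sgn_tt)
  next
    case 3 then show ?thesis using lc_nonperm[of 1 3 m n] by (auto simp: levi_civita_def)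
  qed
qed

lemma lc14: "levi_civita 1 4 m n = (if m = 2 \<and> n = 3 then 1 else if m = 3 \<and> n = 2 then -1 else 0)"
proof -
  consider "m = 2 \<and> n = 3" | "m = 3 \<and> n = 2" | "1 = m \<or> 1 = n \<or> 4 = m \<or> 4 = n \<or> m = n"
    using exhaust_4[of m] exhaust_4[of n] by auto
  then show ?thesis
  proof cases
    case 1 then show ?thesis by (simp add: levi_civita_def Let_def p5 perm_tt sgn_tt)
  next
    case 2 then show ?thesis by (simp add: levi_civita_def Let_def p3 permutes_swap_id sgn_t)
  next
    case 3 then show ?thesis using lc_nonperm[of 1 4 m n] by (auto simp: levi_civita_def)
  qed
qed

lemma antisym_entry: "antisym4 W \<Longrightarrow> W$i$j = - W$j$i"
proof -
  assume "antisym4 W"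
  then have "(Finite_Cartesian_Product.transpose W)$j$i = (-W)$j$i" unfolding antisym4_def by simp
  then show ?thesis by (simp add: Finite_Cartesian_Product.transpose_def)
qed

lemma row4_simps[simp]: "row4 a b c d 1 = a" "row4 a b c d 2 = b" "row4 a b c d 3 = c" "row4 a b c d 4 = d" "row4 a b c d 0 = d"
  by (simp_all add: row4_def)

lemma mat4_expand: "mat4 [[a11,a12,a13,a14],[a21,a22,a23,a24],[a31,a32,a33,a34],[a41,a42,a43,a44]]
   = (\<chi> i j. row4 (row4 a11 a12 a13 a14 j) (row4 a21 a22 a23 a24 j) (row4 a31 a32 a33 a34 j) (row4 a41 a42 a43 a44 j) i)"
  unfolding mat4_def vec_eq_iff forall_4 by (simp add: row4_def)

lemma mat_eq4: "(\<And>i j. i = 1 \<or> i = 2 \<or> i = 3 \<or> i = 4 \<Longrightarrow> j = 1 \<or> j = 2 \<or> j = 3 \<or> j = 4 \<Longrightarrow> (A::'a^4^4)$i$j = B$i$j) \<Longrightarrow> A = B"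
  unfolding vec_eq_iff using exhaust_4 by blast

lemma hodge12: "hodge_star W $1$2 = (W$3$4 - W$4$3)/2"
  by (simp add: hodge_star_def lc12 sum_4 if_distrib cong: if_cong)
lemma hodge13: "hodge_star W $1$3 = (W$4$2 - W$2$4)/2"
  by (simp add: hodge_star_def lc13 sum_4 if_distrib cong: if_cong)
lemma hodge14: "hodge_star W $1$4 = (W$2$3 - W$3$2)/2"
  by (simp add: hodge_star_def lc14 sum_4 if_distrib cong: if_cong)

lemma W_form:
  assumes anti: "antisym4 W" and dual: "hodge_star W = s *\<^sub>R W"
  shows "W = mat4 [[0, W$1$2, W$1$3, W$1$4], [- W$1$2, 0, s * W$1$4, - s * W$1$3],
                   [- W$1$3, - s * W$1$4, 0, s * W$1$2], [- W$1$4, s * W$1$3, - s * W$1$2, 0]]"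
proof -
  have e: "\<And>i j. W$i$j = - W$j$i" using antisym_entry[OF anti] by blast
  have d: "W$i$i = 0" for i using e[of i i] by linarith
  have "hodge_star W $1$2 = s * W$1$2" "hodge_star W $1$3 = s * W$1$3" "hodge_star W $1$4 = s * W$1$4"
    using dual by simp_all
  then have h: "W$3$4 = s * W$1$2" "W$2$4 = - s * W$1$3" "W$2$3 = s * W$1$4"
    unfolding hodge12 hodge13 hodge14 using e[of 4 3] e[of 4 2] e[of 3 2] by auto
  show ?thesis
    unfolding mat4_expand
    apply (rule mat_eq4)
    using d e[of 2 1] e[of 3 1] e[of 4 1] e[of 4 3] e[of 4 2] e[of 3 2] h
    apply (elim disjE)
    apply simp
    apply simp
    apply simp
    apply simp
    apply simp
    apply simp
    apply simp
    apply simp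
    apply simp
    apply simp
    apply simp
    apply simp
    apply simp
    apply simp
    apply simp
    apply simp
    done
qed

definition Xm :: "real \<Rightarrow> real \<Rightarrow> real \<Rightarrow> real \<Rightarrow> real \<Rightarrow> real^4^4" where
  "Xm s a b c t = mat4 [[a*t, 0, -s*t*c, s*t*b], [0, a*t, t*b, t*c], [-s*c*t, b*t, -t*a, 0], [s*b*t, c*t, 0, -t*a]]"

lemma X_form:
  assumes s: "s = 1 \<or> s = -1"
  shows "mat4 [[0, a, b, c], [- a, 0, s * c, - s * b], [- b, - s * c, 0, s * a], [- c, s * b, - s * a, 0]]
     ** theta_pm (-s) t = Xm s a b c t"
  unfolding Xm_def theta_pm_def mat4_expand matrix_matrix_mult_def
  apply (rule mat_eq4)
  apply (elim disjE)
  using s by (auto simp: sum_4)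

lemma EX1:
  assumes s: "s = 1 \<or> s = -1"
  shows "(E4 - Xm s a b c t) ** (E4 + Xm s a b c t) = (1 - t*t*(a*a+b*b+c*c)) *\<^sub>R E4"
  unfolding Xm_def E4_def mat4_expand matrix_matrix_mult_def
  apply (rule mat_eq4)
  apply (elim disjE)
  using s by (auto simp: sum_4 mat_def algebra_simps)

lemma EX2:
  assumes s: "s = 1 \<or> s = -1"
  shows "(E4 + Xm s a b c t) ** (E4 - Xm s a b c t) = (1 - t*t*(a*a+b*b+c*c)) *\<^sub>R E4"
  unfolding Xm_def E4_def mat4_expand matrix_matrix_mult_def
  apply (rule mat_eq4)
  apply (elim disjE)
  using s by (auto simp: sum_4 mat_def algebra_simps)

lemma Xm_entries: "Xm s a b c t $1$1 = a*t" "Xm s a b c t $3$3 = -t*a"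
   "Xm s a b c t $1$3 = -s*t*c" "Xm s a b c t $1$4 = s*t*b"
  by (simp_all add: Xm_def mat4_expand)

lemma E4_entries: "E4$1$1 = 1" "E4$3$3 = 1" "E4$1$3 = 0" "E4$1$4 = 0"
  by (simp_all add: E4_def mat_def)

lemma inv_from_two_sided:
  fixes A B :: "real^4^4"
  assumes "A ** B = mat 1" "B ** A = mat 1"
  shows "matrix_inv A = B"
proof -
  have u: "A' = B" if "A ** A' = mat 1 \<and> A' ** A = mat 1" for A'
  proof -
    have "A' = A' ** (A ** B)" using assms by simp
    also have "\<dots> = (A' ** A) ** B" by (rule matrix_mul_assoc)
    also have "\<dots> = B" using that by simp
    finally show ?thesis .
  qed
  show ?thesis unfolding matrix_inv_def
  proof (rule someI2)
    show "A ** B = mat 1 \<and> B ** A = mat 1" using assms by simp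
  next
    fix x assume "A ** x = mat 1 \<and> x ** A = mat 1" then show "x = B" by (rule u)
  qed
qed

lemma pointwise:
  fixes W :: "real^4^4"
  assumes s: "s = 1 \<or> s = -1" and anti: "antisym4 W" and dual: "hodge_star W = s *\<^sub>R W"
    and nz: "det (E4 - W ** theta_pm (-s) t) \<noteq> 0"
  defines "C \<equiv> t*t*(W$1$2*W$1$2 + W$1$3*W$1$3 + W$1$4*W$1$4)"
  shows "1 - C \<noteq> 0"
    and "matrix_inv (E4 - W ** theta_pm (-s) t) = inverse (1 - C) *\<^sub>R (E4 + W ** theta_pm (-s) t)"
    and "W ** theta_pm (-s) t = Xm s (W$1$2) (W$1$3) (W$1$4) t"
proof -
  have X: "W ** theta_pm (-s) t = Xm s (W$1$2) (W$1$3) (W$1$4) t"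
    using X_form[OF s, of "W$1$2" "W$1$3" "W$1$4" t] W_form[OF anti dual] by simp
  then show "W ** theta_pm (-s) t = Xm s (W$1$2) (W$1$3) (W$1$4) t" .
  define X where "X = W ** theta_pm (-s) t"
  have e1: "(E4 - X) ** (E4 + X) = (1 - C) *\<^sub>R E4" and e2: "(E4 + X) ** (E4 - X) = (1 - C) *\<^sub>R E4"
    unfolding X_def X C_def using EX1[OF s] EX2[OF s] by simp_all
  show nzC: "1 - C \<noteq> 0"
  proof
    assume C0: "1 - C = 0"
    have "invertible (E4 - X)" using nz invertible_det_nz X_def by blast
    then obtain A' where A': "A' ** (E4 - X) = mat 1" unfolding invertible_def by blast
    have "E4 + X = A' ** ((E4 - X) ** (E4 + X))" using A' by (simp add: matrix_mul_assoc)
    also have "\<dots> = 0" using e1 C0 by simp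
    finally have z: "E4 + X = 0" .
    have "(E4 + X)$1$1 = 0" "(E4 + X)$3$3 = 0" using z by simp_all
    then show False unfolding X_def X using mult.commute[of "W$1$2" t] by (simp add: Xm_entries E4_entries)
  qed
  have "(E4 - X) ** (inverse (1 - C) *\<^sub>R (E4 + X)) = mat 1"
    using e1 nzC by (simp add: matrix_scalar_ac scalar_matrix_assoc[symmetric] E4_def)
  moreover have "(inverse (1 - C) *\<^sub>R (E4 + X)) ** (E4 - X) = mat 1"
    using e2 nzC by (simp add: scalar_matrix_assoc[symmetric] E4_def)
  ultimately show "matrix_inv (E4 - W ** theta_pm (-s) t) = inverse (1 - C) *\<^sub>R (E4 + W ** theta_pm (-s) t)"
    using inv_from_two_sided X_def by blast
qed

definition Lmap :: "real^4^4 \<Rightarrow> complex^2^2" where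
  "Lmap M = (\<chi> i j. if i = 1 then (if j = 1 then complex_of_real (M$1$1) else Complex (M$1$3) (- M$1$4))
                      else (if j = 1 then Complex (M$1$3) (M$1$4) else complex_of_real (M$3$3)))"

lemma Lmap_entries: "Lmap M $1$1 = complex_of_real (M$1$1)" "Lmap M $1$2 = Complex (M$1$3) (- M$1$4)"
  "Lmap M $2$1 = Complex (M$1$3) (M$1$4)" "Lmap M $2$2 = complex_of_real (M$3$3)"
  by (simp_all add: Lmap_def)

lemma mat_eq2: "(\<And>i j. i = 1 \<or> i = 2 \<Longrightarrow> j = 1 \<or> j = 2 \<Longrightarrow> (A::'a^2^2)$i$j = B$i$j) \<Longrightarrow> A = B"
  unfolding vec_eq_iff using exhaust_2 by blast

lemma iota_entries: "iota_sym H $1$1 = Re (H$1$1)" "iota_sym H $3$3 = Re (H$2$2)"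
  "iota_sym H $1$3 = Re ((H$1$2 + H$2$1) / 2)" "iota_sym H $1$4 = Re ((H$2$1 - H$1$2) / (2 * \<i>))"
  by (simp_all add: iota_sym_def Let_def mat4_expand)

lemma herm_iota: assumes "hermitian2 H" shows "Lmap (iota_sym H) = H"
proof -
  have h: "H$1$1 = cnj (H$1$1)" "H$2$2 = cnj (H$2$2)" "H$2$1 = cnj (H$1$2)"
    using assms unfolding hermitian2_def by blast+
  have r: "Im (H$1$1) = 0" "Im (H$2$2) = 0" using arg_cong[OF h(1), of Im] arg_cong[OF h(2), of Im] by simp_all
  show ?thesis
    apply (rule mat_eq2)
    apply (elim disjE)
    using r h(3) by (auto simp: Lmap_entries iota_entries complex_eq_iff)
qed

lemma Lmap_linear: "bounded_linear Lmap"
  unfolding linear_conv_bounded_linear[symmetric]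
  by (rule linearI) (simp_all add: Lmap_def vec_eq_iff complex_eq_iff)

lemma det_alg:
  fixes a b c t sg DD :: real
  assumes DD: "DD = 1 - t*t*(a*a+b*b+c*c)" "DD \<noteq> 0" and s: "sg = 1 \<or> sg = -1"
  shows "(2*inverse DD*(1+a*t) - 1)*(2*inverse DD*(1-t*a) - 1) - (2*inverse DD*(-sg*t*c))^2 - (2*inverse DD*(sg*t*b))^2 = 1"
proof -
  define x where "x = inverse DD"
  have Q: "(2*(1+a*t) - DD)*(2*(1-t*a) - DD) - (2*(-sg*t*c))^2 - (2*(sg*t*b))^2 = DD*DD"
    using DD(1) s by (auto simp: algebra_simps power2_eq_square)
  have f: "2*inverse DD*(1+a*t) - 1 = x * (2*(1+a*t) - DD)"
    "2*inverse DD*(1-t*a) - 1 = x * (2*(1-t*a) - DD)"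
    "2*inverse DD*(-sg*t*c) = x * (2*(-sg*t*c))" "2*inverse DD*(sg*t*b) = x * (2*(sg*t*b))"
    using DD(2) unfolding x_def by (simp_all add: field_simps)
  have id: "\<And>X Y Z V x::real. (x*X)*(x*Y) - (x*Z)^2 - (x*V)^2 = x*x*(X*Y - Z^2 - V^2)"
    by (simp add: algebra_simps power2_eq_square)
  show ?thesis unfolding f id Q x_def using DD(2) by (simp add: field_simps)
qed

lemma pd_real:
  fixes A D p q x1 y1 x2 y2 :: real
  assumes A: "A > 0" and det: "A*D - (p^2+q^2) = 1" and nz: "\<not> (x1 = 0 \<and> y1 = 0 \<and> x2 = 0 \<and> y2 = 0)"
  shows "A*(x1^2+y1^2) + D*(x2^2+y2^2) + 2*(x1*(p*x2 - q*y2) + y1*(p*y2 + q*x2)) > 0"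
proof -
  define R where "R = A*(x1^2+y1^2) + D*(x2^2+y2^2) + 2*(x1*(p*x2 - q*y2) + y1*(p*y2 + q*x2))"
  define S where "S = (A*x1 + (p*x2 - q*y2))^2 + (A*y1 + (p*y2 + q*x2))^2 + (x2^2+y2^2)"
  have "A*R - S = (A*D - (p^2+q^2) - 1)*(x2^2+y2^2)"
    unfolding R_def S_def by (simp add: algebra_simps power2_eq_square)
  then have AR: "A*R = S" using det by simp
  have "S > 0"
  proof (cases "x2 = 0 \<and> y2 = 0")
    case True
    then have "x1 \<noteq> 0 \<or> y1 \<noteq> 0" using nz by auto
    then have "(A*x1)^2 + (A*y1)^2 > 0" using A by (auto simp: sum_power2_gt_zero_iff)
    then show ?thesis using True unfolding S_def by simp
  next
    case False
    then have "x2^2 + y2^2 > 0" by (auto simp: sum_power2_gt_zero_iff)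
    moreover have "(A*x1 + (p*x2 - q*y2))^2 + (A*y1 + (p*y2 + q*x2))^2 \<ge> 0" by simp
    ultimately show ?thesis unfolding S_def by linarith
  qed
  then have "A*R > 0" using AR by simp
  then show ?thesis using A unfolding R_def by (simp add: zero_less_mult_iff)
qed

lemma pd2:
  fixes H :: "complex^2^2"
  assumes H: "H$1$1 = complex_of_real A" "H$2$2 = complex_of_real D" "H$1$2 = Complex p q" "H$2$1 = Complex p (-q)"
    and A: "A > 0" and det: "A*D - (p^2+q^2) = 1"
  shows "pos_def2 H"
  unfolding pos_def2_def
proof (intro allI impI)
  fix v :: "complex^2" assume v: "v \<noteq> 0"
  obtain x1 y1 where v1: "v$1 = Complex x1 y1" by (meson complex.exhaust_sel)
  obtain x2 y2 where v2: "v$2 = Complex x2 y2" by (meson complex.exhaust_sel)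
  have nz: "\<not> (x1 = 0 \<and> y1 = 0 \<and> x2 = 0 \<and> y2 = 0)"
  proof
    assume "x1 = 0 \<and> y1 = 0 \<and> x2 = 0 \<and> y2 = 0"
    then have "v$1 = 0" "v$2 = 0" using v1 v2 by (simp_all add: Complex_eq)
    then have "v = 0" unfolding vec_eq_iff using exhaust_2 by (metis zero_index)
    then show False using v by simp
  qed
  have Q: "(\<Sum>i\<in>UNIV. \<Sum>j\<in>UNIV. cnj (v$i) * H$i$j * v$j) =
     complex_of_real (A*(x1^2+y1^2) + D*(x2^2+y2^2) + 2*(x1*(p*x2 - q*y2) + y1*(p*y2 + q*x2)))"
    by (simp add: sum_2 H v1 v2 complex_eq_iff algebra_simps power2_eq_square)
  show "(\<Sum>i\<in>UNIV. \<Sum>j\<in>UNIV. cnj (v$i) * H$i$j * v$j) \<in> \<real> \<and>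
      Re (\<Sum>i\<in>UNIV. \<Sum>j\<in>UNIV. cnj (v$i) * H$i$j * v$j) > 0"
    unfolding Q using pd_real[OF A det nz] by simp
qed

lemma conn_sign:
  fixes f :: "'a::topological_space \<Rightarrow> real"
  assumes "connected U" "continuous_on U f" "\<forall>x\<in>U. f x \<noteq> 0"
  shows "(\<forall>x\<in>U. f x > 0) \<or> (\<forall>x\<in>U. f x < 0)"
proof (rule ccontr)
  assume "\<not> ?thesis"
  then obtain x y where xy: "x \<in> U" "y \<in> U" "f x \<le> 0" "f y \<ge> 0" by (meson not_le)
  have c: "connected (f ` U)" using assms connected_continuous_image by blast
  obtain z where "z \<in> f ` U" "inner (1::real) z = 0"
    using connected_ivt_hyperplane[OF c, of "f x" "f y" 1 0] xy by auto
  then show False using assms(3) by auto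
qed

lemma deriv_zero_open:
  assumes "open U" "\<forall>y\<in>U. f y = 0" "x \<in> U"
  shows "frechet_derivative f (at x) = (\<lambda>v. 0)"
proof -
  have "((\<lambda>_. 0) has_derivative (\<lambda>v. 0)) (at x)" by simp
  then have "(f has_derivative (\<lambda>v. 0)) (at x)"
    using has_derivative_transform_within_open[of "\<lambda>_. 0" "\<lambda>v. 0" x UNIV U f] assms by auto
  then show ?thesis using frechet_derivative_at by metis
qed

lemma ricci_zero:
  assumes U: "open U" and d: "\<forall>x\<in>U. det (h x) = 1" and x: "x \<in> U"
  shows "ricci h j k x = 0"
proof -
  define F where "F = (\<lambda>y. complex_of_real (ln (Re (det (h y)))))"
  have F0: "\<forall>y\<in>U. F y = 0" using d unfolding F_def by simp
  have "\<forall>y\<in>U. dz k F y = 0"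
    using deriv_zero_open[OF U F0] unfolding dz_def partial4_def by simp
  then have "dzbar j (dz k F) x = 0"
    using deriv_zero_open[OF U _ x, of "dz k F"] unfolding dzbar_def partial4_def by simp
  then show ?thesis unfolding ricci_def F_def .
qed

lemma bl_entry: "bounded_linear (\<lambda>M::real^4^4. M$i$j)"
  using bounded_linear_compose[OF bounded_linear_vec_nth[of j] bounded_linear_vec_nth[of i]] by simp

lemma bl_mult_right: "bounded_linear (\<lambda>A::real^4^4. A ** B)"
  unfolding linear_conv_bounded_linear[symmetric]
  by (rule linearI)
     (simp_all add: matrix_matrix_mult_def vec_eq_iff sum.distrib distrib_right scaleR_sum_right sum_distrib_left mult.assoc)

lemma C_k_diff:
  assumes "open U" "C_k_on k f U" "C_k_on k g U"
  shows "C_k_on k (\<lambda>x. f x - g x) U"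
proof -
  have "C_k_on k (\<lambda>x. f x + (- g x)) U"
    by (rule C_k_add[OF assms(1,2) C_k_linear[OF bounded_linear_minus[OF bounded_linear_ident] assms(1,3)]])
  then show ?thesis by simp
qed

lemma C_k_mult:
  fixes f g :: "'a::real_normed_vector \<Rightarrow> real"
  assumes "open U" "C_k_on k f U" "C_k_on k g U"
  shows "C_k_on k (\<lambda>x. f x * g x) U"
  using C_k_bilinear[OF bounded_bilinear_mult assms] .

lemma C_k_scaleR:
  assumes "open U" "C_k_on k f U" "C_k_on k g U"
  shows "C_k_on k (\<lambda>x. f x *\<^sub>R g x) U"
  using C_k_bilinear[OF bounded_bilinear_scaleR assms] .

theorem theorem3p1:
  fixes s t :: real
    and U :: "(real^4) set"
    and w :: "real^4 \<Rightarrow> real^4^4"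
    and g :: "real^4 \<Rightarrow> real^4^4"
    and h :: "real^4 \<Rightarrow> complex^2^2"
  assumes s: "s = 1 \<or> s = -1"
    and U: "open U" "connected U"
    and w_smooth: "smooth_on U w"
    and w_antisym: "\<forall>x\<in>U. antisym4 (w x)"
    and w_dual: "\<forall>x\<in>U. hodge_star (w x) = s *\<^sub>R w x"
    and det_nz: "\<forall>x\<in>U. det (E4 - w x ** theta_pm (-s) t) \<noteq> 0"
    and g_def: "\<forall>x\<in>U. g x = 2 *\<^sub>R matrix_inv (E4 - w x ** theta_pm (-s) t) - E4"
    and g_img: "\<forall>x\<in>U. g x \<in> iota_sym ` {H. hermitian2 H}"
    and h_def: "\<forall>x\<in>U. h x = (THE H. hermitian2 H \<and> iota_sym H = g x)"
  shows "smooth_on U h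
    \<and> (\<forall>x\<in>U. hermitian2 (h x))
    \<and> ((\<forall>x\<in>U. pos_def2 (h x)) \<or> (\<forall>x\<in>U. neg_def2 (h x)))
    \<and> (\<forall>x\<in>U. det (h x) = 1)
    \<and> (\<forall>x\<in>U. \<forall>j k. ricci h j k x = 0)"
proof -
  define Th where "Th = theta_pm (-s) t"
  define Cf where "Cf = (\<lambda>y. t*t*(w y$1$2*w y$1$2 + w y$1$3*w y$1$3 + w y$1$4*w y$1$4))"
  define G where "G = (\<lambda>y. (2 * inverse (1 - Cf y)) *\<^sub>R (E4 + w y ** Th) - E4)"
  have hx: "h x = Lmap (g x) \<and> hermitian2 (h x)" if x: "x \<in> U" for x
  proof -
    obtain H0 where H0: "hermitian2 H0" "iota_sym H0 = g x" using g_img x by auto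
    have L: "Lmap (g x) = H0" using herm_iota[OF H0(1)] H0(2) by simp
    have "(THE H. hermitian2 H \<and> iota_sym H = g x) = Lmap (g x)"
    proof (rule the_equality)
      show "hermitian2 (Lmap (g x)) \<and> iota_sym (Lmap (g x)) = g x" using L H0 by simp
    next
      fix H assume "hermitian2 H \<and> iota_sym H = g x"
      then show "H = Lmap (g x)" using herm_iota by metis
    qed
    then show ?thesis using h_def x L H0 by simp
  qed
  have pw: "1 - Cf x \<noteq> 0 \<and> g x = G x \<and> w x ** Th = Xm s (w x$1$2) (w x$1$3) (w x$1$4) t" if x: "x \<in> U" for x
  proof -
    note P = pointwise[OF s w_antisym[rule_format, OF x] w_dual[rule_format, OF x] det_nz[rule_format, OF x]]
    show ?thesis using P g_def x unfolding G_def Cf_def Th_def by simp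
  qed
  have wk: "C_k_on k w U" for k using w_smooth unfolding smooth_on_def by blast
  have ent: "C_k_on k (\<lambda>y. w y $i$j) U" for k i j using C_k_linear[OF bl_entry U(1) wk] .
  have Cfk: "C_k_on k Cf U" for k
    unfolding Cf_def
    by (intro C_k_mult C_k_add C_k_const ent U(1))
  have Dk: "C_k_on k (\<lambda>y. 1 - Cf y) U" for k by (intro C_k_diff C_k_const Cfk U(1))
  have Ik: "C_k_on k (\<lambda>y. inverse (1 - Cf y)) U" for k
    by (rule C_k_inverse[OF U(1)]) (use Dk pw in auto)
  have Mk: "C_k_on k (\<lambda>y. E4 + w y ** Th) U" for k
    by (intro C_k_add C_k_const C_k_linear[OF bl_mult_right U(1) wk] U(1))
  have Gk: "C_k_on k G U" for k
    unfolding G_def by (intro C_k_diff C_k_scaleR C_k_mult C_k_const Ik Mk U(1))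
  have hk: "C_k_on k h U" for k
    by (rule C_k_cong[OF U(1) _ C_k_linear[OF Lmap_linear U(1) Gk]]) (use hx pw in simp)
  have smooth: "smooth_on U h" unfolding smooth_on_def using hk by blast
  have facts: "Re (h x $1$1) * Re (h x $2$2) - ((Re (h x $1$2))^2 + (Im (h x $1$2))^2) = 1
     \<and> h x $1$1 = complex_of_real (Re (h x $1$1)) \<and> h x $2$2 = complex_of_real (Re (h x $2$2))
     \<and> h x $1$2 = Complex (Re (h x $1$2)) (Im (h x $1$2)) \<and> h x $2$1 = Complex (Re (h x $1$2)) (- Im (h x $1$2))"
    if x: "x \<in> U" for x
  proof -
    define a where "a = w x$1$2"
    define b where "b = w x$1$3"
    define c where "c = w x$1$4"
    define DD where "DD = 1 - t*t*(a*a+b*b+c*c)"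
    have DD: "DD = 1 - t*t*(a*a+b*b+c*c)" "DD \<noteq> 0" using pw[OF x] unfolding DD_def a_def b_def c_def Cf_def by simp_all
    have gx: "g x = (2 * inverse DD) *\<^sub>R (E4 + Xm s a b c t) - E4"
      using pw[OF x] unfolding G_def DD_def a_def b_def c_def Cf_def by simp
    have ge: "g x $1$1 = 2*inverse DD*(1+a*t) - 1" "g x $3$3 = 2*inverse DD*(1-t*a) - 1"
      "g x $1$3 = 2*inverse DD*(-s*t*c)" "g x $1$4 = 2*inverse DD*(s*t*b)"
      unfolding gx by (simp_all add: Xm_entries E4_entries algebra_simps)
    have he: "h x $1$1 = complex_of_real (g x $1$1)" "h x $2$2 = complex_of_real (g x $3$3)"
      "h x $1$2 = Complex (g x $1$3) (- g x $1$4)" "h x $2$1 = Complex (g x $1$3) (g x $1$4)"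
      using hx[OF x] by (simp_all add: Lmap_entries)
    have d: "g x$1$1 * g x$3$3 - (g x$1$3)^2 - (g x$1$4)^2 = 1"
      unfolding ge by (rule det_alg[OF DD s])
    show ?thesis using d by (simp add: he algebra_simps)
  qed
  have herm: "\<forall>x\<in>U. hermitian2 (h x)" using hx by blast
  have det1: "\<forall>x\<in>U. det (h x) = 1"
  proof
    fix x assume x: "x \<in> U"
    have f: "Re (h x $1$1) * Re (h x $2$2) - ((Re (h x $1$2))^2 + (Im (h x $1$2))^2) = 1"
      using facts[OF x] by blast
    have "det (h x) = complex_of_real (Re (h x $1$1)) * complex_of_real (Re (h x $2$2))
       - Complex (Re (h x $1$2)) (Im (h x $1$2)) * Complex (Re (h x $1$2)) (- Im (h x $1$2))"
      unfolding det_2 using facts[OF x] by metis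
    also have "\<dots> = complex_of_real (Re (h x $1$1) * Re (h x $2$2) - ((Re (h x $1$2))^2 + (Im (h x $1$2))^2))"
      by (simp add: complex_eq_iff power2_eq_square)
    finally show "det (h x) = 1" using f by simp
  qed
  have nz: "\<forall>x\<in>U. Re (h x $1$1) \<noteq> 0"
  proof
    fix x assume x: "x \<in> U"
    have "Re (h x $1$1) * Re (h x $2$2) = 1 + ((Re (h x $1$2))^2 + (Im (h x $1$2))^2)"
      using facts[OF x] by linarith
    also have "\<dots> > 0" by (simp add: add_pos_nonneg)
    finally show "Re (h x $1$1) \<noteq> 0" by auto
  qed
  have cont: "continuous_on U (\<lambda>y. Re (h y $1$1))"
  proof -
    have "continuous_on U h" using hk[of 0] by simp
    moreover have "bounded_linear (\<lambda>H::complex^2^2. Re (H$1$1))"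
      using bounded_linear_compose[OF bounded_linear_Re bounded_linear_compose[OF bounded_linear_vec_nth[of 1] bounded_linear_vec_nth[of 1]]]
      by simp
    ultimately show ?thesis using bounded_linear.continuous_on by blast
  qed
  have sign: "(\<forall>x\<in>U. Re (h x $1$1) > 0) \<or> (\<forall>x\<in>U. Re (h x $1$1) < 0)"
    by (rule conn_sign[OF U(2) cont nz])
  have defn: "(\<forall>x\<in>U. pos_def2 (h x)) \<or> (\<forall>x\<in>U. neg_def2 (h x))"
  proof (rule disjE[OF sign])
    assume pos: "\<forall>x\<in>U. Re (h x $1$1) > 0"
    have "pos_def2 (h x)" if x: "x \<in> U" for x
      using pd2[of "h x" "Re (h x $1$1)" "Re (h x $2$2)" "Re (h x $1$2)" "Im (h x $1$2)"] facts[OF x] pos x by blast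
    then show ?thesis by blast
  next
    assume neg: "\<forall>x\<in>U. Re (h x $1$1) < 0"
    have "neg_def2 (h x)" if x: "x \<in> U" for x
    proof -
      have f: "Re (h x $1$1) * Re (h x $2$2) - ((Re (h x $1$2))^2 + (Im (h x $1$2))^2) = 1"
        "h x $1$1 = complex_of_real (Re (h x $1$1))" "h x $2$2 = complex_of_real (Re (h x $2$2))"
        "h x $1$2 = Complex (Re (h x $1$2)) (Im (h x $1$2))" "h x $2$1 = Complex (Re (h x $1$2)) (- Im (h x $1$2))"
        using facts[OF x] by blast+
      have "pos_def2 (- h x)"
        apply (rule pd2[of "- h x" "- Re (h x $1$1)" "- Re (h x $2$2)" "- Re (h x $1$2)" "- Im (h x $1$2)"])
        using f neg x by (simp_all add: complex_eq_iff)
      then show ?thesis unfolding neg_def2_def .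
    qed
    then show ?thesis by blast
  qed
  have ric: "\<forall>x\<in>U. \<forall>j k. ricci h j k x = 0" using ricci_zero[OF U(1) det1] by blast
  show ?thesis using smooth herm defn det1 ric by blast
qed

end
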